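(* Let $\lambda\in(0,1)$ and let $G$ be a finite simple connected graph with $n\ge 2$ vertices. Then $$\min_{1\le D\le n-1}\left[\frac{\lambda\left[1-(D+1)\lambda^{D}+D\lambda^{D+1}\right]}{(\lambda-1)^2}+(n-D-1)D\lambda^{D}\right]\;\le\; mt^{e}_{\lambda}(G).$$ Moreover, this lower bound is attained at the starting vertex of a broom on $n$ vertices, i.e. there is a broom $B$ on $n$ vertices with $mt^{e}_{\lambda}(B)$ equal to the left-hand side, the minimum of $t^e_\lambda$ over the vertices of $B$ being attained at its starting vertex.
   Context: $d(u,v)$ denotes graph distance. For a vertex $u$ of $G=(V,E)$, $t^{e}_{\lambda}(u)=\sum_{v\in V\setminus\{u\}} d(u,v)\lambda^{d(u,v)}$, and $mt^{e}_{\lambda}(G)=\min\{t^{e}_{\lambda}(u):u\in V\}$. A broom on $n$ vertices (with parameter $D$, $1\le D\le n-1$) is the graph consisting of a path $u=v_0v_1\cdots v_D$ together with $n-D-1$ further vertices, each adjacent only to $v_{D-1}$; equivalently, it is obtained by identifying a pendant vertex of a star with an end-vertex of a path. The vertex $u=v_0$ is called the starting vertex of the broom. *)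

theory Defs
  imports Complex_Main
begin

definition simple_graph :: "'a set \<Rightarrow> ('a \<Rightarrow> 'a \<Rightarrow> bool) \<Rightarrow> bool" where
  "simple_graph V E \<longleftrightarrow> finite V \<and> (\<forall>u v. E u v \<longrightarrow> u \<in> V \<and> v \<in> V)
     \<and> (\<forall>u v. E u v \<longrightarrow> E v u) \<and> (\<forall>u. \<not> E u u)"

definition walk :: "'a set \<Rightarrow> ('a \<Rightarrow> 'a \<Rightarrow> bool) \<Rightarrow> 'a list \<Rightarrow> bool" where
  "walk V E xs \<longleftrightarrow> xs \<noteq> [] \<and> set xs \<subseteq> V \<and> successively E xs"

definition connected_graph :: "'a set \<Rightarrow> ('a \<Rightarrow> 'a \<Rightarrow> bool) \<Rightarrow> bool" where
  "connected_graph V E \<longleftrightarrow>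
     (\<forall>u\<in>V. \<forall>v\<in>V. \<exists>xs. walk V E xs \<and> hd xs = u \<and> last xs = v)"

definition gdist :: "'a set \<Rightarrow> ('a \<Rightarrow> 'a \<Rightarrow> bool) \<Rightarrow> 'a \<Rightarrow> 'a \<Rightarrow> nat" where
  "gdist V E u v = (LEAST k. \<exists>xs. walk V E xs \<and> hd xs = u \<and> last xs = v \<and> length xs = k + 1)"

definition te :: "'a set \<Rightarrow> ('a \<Rightarrow> 'a \<Rightarrow> bool) \<Rightarrow> real \<Rightarrow> 'a \<Rightarrow> real" where
  "te V E lam u = (\<Sum>v\<in>V - {u}. real (gdist V E u v) * lam ^ gdist V E u v)"

definition mte :: "'a set \<Rightarrow> ('a \<Rightarrow> 'a \<Rightarrow> bool) \<Rightarrow> real \<Rightarrow> real" where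
  "mte V E lam = Min (te V E lam ` V)"

(* broom on vertex set {0..<n} with parameter D: path 0-1-...-D, and vertices
   D+1,...,n-1 adjacent only to D-1.  Starting vertex is 0. *)
definition broom_adj :: "nat \<Rightarrow> nat \<Rightarrow> nat \<Rightarrow> nat \<Rightarrow> bool" where
  "broom_adj n D i j \<longleftrightarrow> i < n \<and> j < n \<and>
     ((j = i + 1 \<and> j \<le> D) \<or> (i = j + 1 \<and> i \<le> D) \<or>
      (i = D - 1 \<and> D < j) \<or> (j = D - 1 \<and> D < i))"

definition broom_bound :: "real \<Rightarrow> nat \<Rightarrow> nat \<Rightarrow> real" where
  "broom_bound lam n D = lam * (1 - real (D + 1) * lam ^ D + real D * lam ^ (D + 1)) / (lam - 1)^2
      + real (n - D - 1) * real D * lam ^ D"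

end

theory Submission
  imports Defs
begin


lemma walk_lev:
  assumes "successively E xs" "xs \<noteq> []" "\<And>a b. E a b \<Longrightarrow> lev b \<le> lev a + (1::nat)"
  shows "lev (last xs) \<le> lev (hd xs) + (length xs - 1)"
  using assms
proof (induction xs rule: induct_list012)
  case (3 x y xs)
  then have "lev (last (y#xs)) \<le> lev y + length xs" by auto
  moreover have "lev y \<le> lev x + 1" using 3 by auto
  ultimately show ?case by simp
qed auto

lemma gdist_le:
  assumes "walk V E xs" "hd xs = u" "last xs = v"
  shows "gdist V E u v \<le> length xs - 1"
proof -
  have "xs \<noteq> []" using assms walk_def by auto
  then have "\<exists>ys. walk V E ys \<and> hd ys = u \<and> last ys = v \<and> length ys = (length xs - 1) + 1"
    using assms by (intro exI[of _ xs]) auto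
  then show ?thesis unfolding gdist_def by (rule Least_le)
qed

lemma gdist_obtain:
  assumes "\<exists>xs. walk V E xs \<and> hd xs = u \<and> last xs = v"
  obtains xs where "walk V E xs" "hd xs = u" "last xs = v" "length xs = gdist V E u v + 1"
proof -
  from assms obtain xs where xs: "walk V E xs" "hd xs = u" "last xs = v" by blast
  then have ex: "\<exists>k xs. walk V E xs \<and> hd xs = u \<and> last xs = v \<and> length xs = k + 1"
    by (intro exI[of _ "length xs - 1"] exI[of _ xs]) (auto simp: walk_def)
  show ?thesis
    using LeastI_ex[OF ex] that unfolding gdist_def by blast
qed

lemma gdist_lev:
  assumes "\<exists>xs. walk V E xs \<and> hd xs = u \<and> last xs = v"
    "\<And>a b. E a b \<Longrightarrow> lev b \<le> lev a + (1::nat)" "lev u = 0"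
  shows "lev v \<le> gdist V E u v"
proof -
  obtain xs where "walk V E xs" "hd xs = u" "last xs = v" "length xs = gdist V E u v + 1"
    using gdist_obtain[OF assms(1)] by blast
  then show ?thesis using walk_lev[of E xs lev] assms(2,3) by (auto simp: walk_def)
qed

context
  fixes V :: "'a set" and E u
  assumes sg: "simple_graph V E" and cg: "connected_graph V E" and uV: "u \<in> V"
begin

lemma reach: "v \<in> V \<Longrightarrow> \<exists>xs. walk V E xs \<and> hd xs = u \<and> last xs = v"
  using cg uV unfolding connected_graph_def by blast

lemma d_u: "gdist V E u u = 0"
  using gdist_le[of V E "[u]" u u] uV by (auto simp: walk_def)

lemma d_pos: assumes "v \<in> V" "v \<noteq> u" shows "1 \<le> gdist V E u v"
proof (rule ccontr)
  assume "\<not> 1 \<le> gdist V E u v"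
  then have "gdist V E u v = 0" by simp
  obtain xs where "walk V E xs" "hd xs = u" "last xs = v" "length xs = gdist V E u v + 1"
    using gdist_obtain[OF reach[OF assms(1)]] by blast
  with \<open>gdist V E u v = 0\<close> have "u = v" by (cases xs) auto
  with assms show False by simp
qed

lemma d_edge: assumes "w \<in> V" "E w v" shows "gdist V E u v \<le> gdist V E u w + 1"
proof -
  obtain xs where xs: "walk V E xs" "hd xs = u" "last xs = w" "length xs = gdist V E u w + 1"
    using gdist_obtain[OF reach[OF assms(1)]] by blast
  have "v \<in> V" using sg assms unfolding simple_graph_def by blast
  then have "walk V E (xs @ [v])" using xs assms unfolding walk_def
    by (auto simp: successively_append_iff)
  then have "gdist V E u v \<le> length (xs @ [v]) - 1"
    using gdist_le[of V E "xs @ [v]" u v] xs by (auto simp: walk_def)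
  then show ?thesis using xs by simp
qed

lemma d_layer:
  assumes "v \<in> V" "1 \<le> k" "k \<le> gdist V E u v"
  shows "\<exists>w\<in>V - {u}. gdist V E u w = k"
proof -
  let ?N = "gdist V E u v"
  obtain xs where xs: "walk V E xs" "hd xs = u" "last xs = v" "length xs = ?N + 1"
    using gdist_obtain[OF reach[OF assms(1)]] by blast
  define g where "g i = gdist V E u (xs ! i)" for i
  have xsV: "\<And>i. i \<le> ?N \<Longrightarrow> xs ! i \<in> V" using xs unfolding walk_def
    by (metis Suc_eq_plus1 in_mono le_imp_less_Suc nth_mem)
  have step: "g (Suc i) \<le> g i + 1" if "i < ?N" for i
  proof -
    have "E (xs ! i) (xs ! Suc i)" using xs that successively_nth[of E xs i] unfolding walk_def by auto
    then show ?thesis unfolding g_def using d_edge xsV that by auto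
  qed
  have mono: "g j \<le> g i + (j - i)" if "i \<le> j" "j \<le> ?N" for i j
    using that
  proof (induction j rule: dec_induct)
    case base then show ?case by simp
  next
    case (step j)
    then have "g (Suc j) \<le> g j + 1" using \<open>\<And>i. i < ?N \<Longrightarrow> g (Suc i) \<le> g i + 1\<close> by auto
    with step show ?case by simp
  qed
  have g0: "g 0 = 0" unfolding g_def using xs d_u by (cases xs) auto
  have gN: "g ?N = ?N" unfolding g_def using xs last_conv_nth[of xs] by (cases xs) auto
  have "g k \<le> k" using mono[of 0 k] g0 assms by simp
  moreover have "?N \<le> g k + (?N - k)" using mono[of k ?N] gN assms by simp
  ultimately have gk: "g k = k" using assms by simp
  have "xs ! k \<in> V" using xsV assms by simp
  moreover have "xs ! k \<noteq> u" using gk d_u assms unfolding g_def by auto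
  ultimately show ?thesis using gk unfolding g_def by blast
qed

end



lemma closed_form:
  fixes lam :: real assumes "lam \<noteq> 1"
  shows "(\<Sum>k=1..D. real k * lam ^ k) = lam * (1 - real (D + 1) * lam ^ D + real D * lam ^ (D + 1)) / (lam - 1)^2"
proof (induction D)
  case 0 then show ?case by simp
next
  case (Suc D)
  have nz: "(lam - 1)^2 \<noteq> 0" using assms by simp
  have "(\<Sum>k=1..Suc D. real k * lam ^ k) = (\<Sum>k=1..D. real k * lam ^ k) + real (Suc D) * lam ^ Suc D"
    by simp
  also have "\<dots> = (lam * (1 - real (D + 1) * lam ^ D + real D * lam ^ (D + 1)) + real (Suc D) * lam ^ Suc D * (lam - 1)^2) / (lam - 1)^2"
    using Suc nz by (simp add: field_simps)
  also have "lam * (1 - real (D + 1) * lam ^ D + real D * lam ^ (D + 1)) + real (Suc D) * lam ^ Suc D * (lam - 1)^2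
     = lam * (1 - real (Suc D + 1) * lam ^ Suc D + real (Suc D) * lam ^ (Suc D + 1))"
    by (simp add: power2_eq_square algebra_simps)
  finally show ?case .
qed

lemma bb_eq:
  fixes lam :: real assumes "lam \<noteq> 1" "j \<le> n - 1"
  shows "broom_bound lam n j = (\<Sum>k=1..j. real k * lam ^ k) + (real (n - 1) - real j) * (real j * lam ^ j)"
proof -
  have "n - j - 1 = (n - 1) - j" by simp
  then have "real (n - j - 1) = real (n - 1) - real j" using assms(2) by (simp add: of_nat_diff)
  then show ?thesis unfolding broom_bound_def closed_form[OF assms(1)] by simp
qed

lemma main_lb:
  fixes V :: "'a set" and E and lam :: real
  assumes sg: "simple_graph V E" and cg: "connected_graph V E" and uV: "u \<in> V"
    and lam: "lam \<noteq> 1" and n2: "card V \<ge> 2"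
  shows "Min (broom_bound lam (card V) ` {1..card V - 1}) \<le> te V E lam u"
proof -
  define n where "n = card V"
  define S where "S = V - {u}"
  define d where "d = gdist V E u"
  define f where "f k = real k * lam ^ k" for k :: nat
  have finV: "finite V" using sg simple_graph_def by blast
  have finS: "finite S" using finV S_def by simp
  have cardS: "card S = n - 1" using uV finV unfolding S_def n_def by simp
  have Sne: "S \<noteq> {}" using cardS n2 n_def by auto
  define e where "e = Max (d ` S)"
  have dpos: "\<And>v. v \<in> S \<Longrightarrow> 1 \<le> d v" unfolding S_def d_def using d_pos[OF sg cg uV] by auto
  have img: "d ` S = {1..e}"
  proof
    show "d ` S \<subseteq> {1..e}" using dpos finS unfolding e_def by auto
    show "{1..e} \<subseteq> d ` S"
    proof
      fix k assume k: "k \<in> {1..e}"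
      have "e \<in> d ` S" unfolding e_def using finS Sne by (intro Max_in) auto
      then obtain v where v: "v \<in> S" "d v = e" by auto
      then obtain w where "w \<in> V - {u}" "gdist V E u w = k"
        using d_layer[OF sg cg uV, of v k] k unfolding S_def d_def by auto
      then show "k \<in> d ` S" unfolding S_def d_def by auto
    qed
  qed
  have e1: "1 \<le> e" using img Sne by (metis atLeastAtMost_iff empty_iff image_is_empty order.refl
      atLeastatMost_empty_iff2 atLeastatMost_empty_iff)
  have en: "e \<le> n - 1" using card_image_le[OF finS, of d] img cardS by simp
  define c where "c k = card {v \<in> S. d v = k}" for k
  have te_eq: "te V E lam u = (\<Sum>k=1..e. real (c k) * f k)"
  proof -
    have "te V E lam u = (\<Sum>v\<in>S. f (d v))" unfolding te_def S_def d_def f_def by simp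
    also have "\<dots> = (\<Sum>k\<in>d ` S. \<Sum>v\<in>{v \<in> S. d v = k}. f (d v))"
      by (rule sum.image_gen[OF finS])
    also have "\<dots> = (\<Sum>k\<in>d ` S. real (c k) * f k)"
      by (rule sum.cong) (auto simp: c_def)
    finally show ?thesis using img by simp
  qed
  have csum: "(\<Sum>k=1..e. real (c k)) = real (n - 1)"
  proof -
    have "real (n - 1) = (\<Sum>v\<in>S. (1::real))" using cardS by simp
    also have "\<dots> = (\<Sum>k\<in>d ` S. \<Sum>v\<in>{v \<in> S. d v = k}. (1::real))"
      by (rule sum.image_gen[OF finS])
    also have "\<dots> = (\<Sum>k\<in>d ` S. real (c k))"
      by (rule sum.cong) (auto simp: c_def)
    finally show ?thesis using img by simp
  qed
  have c1: "1 \<le> c k" if "k \<in> {1..e}" for k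
  proof -
    have "k \<in> d ` S" using that img by simp
    then have "{v \<in> S. d v = k} \<noteq> {}" by auto
    then show ?thesis unfolding c_def using finS by (simp add: Suc_le_eq card_gt_0_iff)
  qed
  have "Min (f ` {1..e}) \<in> f ` {1..e}" using e1 by (intro Min_in) auto
  then obtain j where j: "j \<in> {1..e}" "f j = Min (f ` {1..e})" by auto
  have fj: "f j \<le> f k" if "k \<in> {1..e}" for k using j that by simp
  have "(\<Sum>k=1..e. f k + (real (c k) - 1) * f j) \<le> (\<Sum>k=1..e. real (c k) * f k)"
  proof (rule sum_mono)
    fix k assume k: "k \<in> {1..e}"
    have "0 \<le> (real (c k) - 1) * (f k - f j)" using c1[OF k] fj[OF k] by simp
    then show "f k + (real (c k) - 1) * f j \<le> real (c k) * f k" by (simp add: algebra_simps)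
  qed
  also have "(\<Sum>k=1..e. f k + (real (c k) - 1) * f j) = (\<Sum>k=1..e. f k) + (real (n - 1) - real e) * f j"
    using csum by (simp add: sum.distrib sum_subtractf sum_distrib_right[symmetric])
  finally have A: "(\<Sum>k=1..e. f k) + (real (n - 1) - real e) * f j \<le> te V E lam u" using te_eq by simp
  have split: "{1..e} = {1..j} \<union> {Suc j..e}" using j by auto
  have "(\<Sum>k=1..e. f k) = (\<Sum>k=1..j. f k) + (\<Sum>k=Suc j..e. f k)"
    unfolding split by (rule sum.union_disjoint) auto
  moreover have "(\<Sum>k=Suc j..e. f j) \<le> (\<Sum>k=Suc j..e. f k)"
    by (rule sum_mono) (use j fj in auto)
  moreover have "(\<Sum>k=Suc j..e. f j) = real (e - j) * f j" by simp
  ultimately have B: "(\<Sum>k=1..j. f k) + real (e - j) * f j \<le> (\<Sum>k=1..e. f k)" by simp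
  have "broom_bound lam n j = (\<Sum>k=1..j. f k) + (real (n - 1) - real j) * f j"
    using bb_eq[OF lam, of j n] j en unfolding f_def by simp
  also have "\<dots> \<le> te V E lam u" using A B j by (simp add: of_nat_diff algebra_simps)
  finally have C: "broom_bound lam n j \<le> te V E lam u" .
  have "Min (broom_bound lam n ` {1..n - 1}) \<le> broom_bound lam n j"
    using j en by (intro Min_le) auto
  with C show ?thesis unfolding n_def by simp
qed

lemma mte_lb:
  fixes V :: "'a set" and E and lam :: real
  assumes sg: "simple_graph V E" and cg: "connected_graph V E"
    and lam: "lam \<noteq> 1" and n2: "card V \<ge> 2"
  shows "Min (broom_bound lam (card V) ` {1..card V - 1}) \<le> mte V E lam"
proof -
  have finV: "finite V" using sg simple_graph_def by blast
  have "V \<noteq> {}" using n2 by auto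
  then have "mte V E lam \<in> te V E lam ` V" unfolding mte_def using finV by (intro Min_in) auto
  then obtain u where "u \<in> V" "mte V E lam = te V E lam u" by auto
  with main_lb[OF sg cg _ lam n2] show ?thesis by simp
qed



lemma conn_root:
  assumes sg: "simple_graph V E" and r: "\<forall>v\<in>V. \<exists>xs. walk V E xs \<and> hd xs = r \<and> last xs = v"
  shows "connected_graph V E"
  unfolding connected_graph_def
proof (intro ballI)
  fix u v assume uv: "u \<in> V" "v \<in> V"
  obtain xs where xs: "walk V E xs" "hd xs = r" "last xs = u" using r uv by blast
  obtain ys where ys: "walk V E ys" "hd ys = r" "last ys = v" using r uv by blast
  obtain ys' where ys': "ys = r # ys'" using ys unfolding walk_def by (cases ys) auto
  have sym: "\<And>a b. E a b \<Longrightarrow> E b a" using sg unfolding simple_graph_def by blast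
  have s1: "successively E (rev xs)"
    using xs unfolding walk_def by (auto intro: successively_mono sym)
  have s2: "successively E ys'" "ys' = [] \<or> E r (hd ys')"
    using ys ys' unfolding walk_def by (auto simp: successively_Cons)
  have lr: "last (rev xs) = r" using xs unfolding walk_def by (simp add: last_rev)
  have sV: "set ys' \<subseteq> V" "set xs \<subseteq> V" "xs \<noteq> []" using ys ys' xs unfolding walk_def by auto
  have "successively E (rev xs @ ys')"
    unfolding successively_append_iff using s1 s2 lr by simp
  then have "walk V E (rev xs @ ys')"
    unfolding walk_def using sV by simp
  moreover have "hd (rev xs @ ys') = u" using xs unfolding walk_def by (simp add: hd_rev)
  moreover have "last (rev xs @ ys') = v" using ys ys' lr by (cases "ys' = []") auto
  ultimately show "\<exists>zs. walk V E zs \<and> hd zs = u \<and> last zs = v" by blast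
qed

lemma broom_sg: "simple_graph {0..<n} (broom_adj n D)"
  unfolding simple_graph_def broom_adj_def by auto

lemma broom_lev: "broom_adj n D a b \<Longrightarrow> min b D \<le> min a D + 1"
  unfolding broom_adj_def by auto

lemma upt_walk:
  assumes "i \<le> D" "i < n"
  shows "walk {0..<n} (broom_adj n D) [0..<Suc i]"
proof -
  have "successively (broom_adj n D) [0..<Suc i]"
    unfolding successively_conv_nth
  proof (intro allI impI)
    fix k assume "Suc k < length [0..<Suc i]"
    then have k: "Suc k \<le> i" by simp
    have "[0..<Suc i] ! k = k" "[0..<Suc i] ! Suc k = Suc k" using k by (simp_all del: upt_Suc)
    then show "broom_adj n D ([0..<Suc i] ! k) ([0..<Suc i] ! Suc k)"
      using k assms unfolding broom_adj_def by simp
  qed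
  then show ?thesis using assms unfolding walk_def by (auto simp del: upt_Suc)
qed

lemma broom_walk:
  assumes D: "1 \<le> D" "D \<le> n - 1" and i: "i < n"
  shows "\<exists>xs. walk {0..<n} (broom_adj n D) xs \<and> hd xs = 0 \<and> last xs = i \<and> length xs = min i D + 1"
proof (cases "i \<le> D")
  case True
  then show ?thesis using upt_walk[OF True i]
    by (intro exI[of _ "[0..<Suc i]"]) (auto simp del: upt_Suc)
next
  case False
  obtain D' where D': "D = Suc D'" using D by (cases D) auto
  have w: "walk {0..<n} (broom_adj n D) [0..<Suc D']" using upt_walk[of D' D n] D D' by simp
  have "broom_adj n D D' i" using D' False i unfolding broom_adj_def by auto
  have l: "last [0..<Suc D'] = D'" by simp
  have "successively (broom_adj n D) ([0..<Suc D'] @ [i])"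
    unfolding successively_append_iff using w l \<open>broom_adj n D D' i\<close> unfolding walk_def
    by (simp del: upt_Suc)
  then have "walk {0..<n} (broom_adj n D) ([0..<Suc D'] @ [i])"
    using w i unfolding walk_def by (simp del: upt_Suc)
  moreover have "hd ([0..<Suc D'] @ [i]) = 0" by (simp del: upt_Suc)
  moreover have "length ([0..<Suc D'] @ [i]) = min i D + 1" using False D' by (simp del: upt_Suc)
  moreover have "last ([0..<Suc D'] @ [i]) = i" by simp
  ultimately show ?thesis by blast
qed

lemma broom_conn:
  assumes D: "1 \<le> D" "D \<le> n - 1"
  shows "connected_graph {0..<n} (broom_adj n D)"
proof (rule conn_root[OF broom_sg], intro ballI)
  fix v assume "v \<in> {0..<n}"
  then show "\<exists>xs. walk {0..<n} (broom_adj n D) xs \<and> hd xs = 0 \<and> last xs = v"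
    using broom_walk[OF D, of v] by auto
qed

lemma broom_dist:
  assumes D: "1 \<le> D" "D \<le> n - 1" and i: "i < n"
  shows "gdist {0..<n} (broom_adj n D) 0 i = min i D"
proof -
  obtain xs where xs: "walk {0..<n} (broom_adj n D) xs" "hd xs = 0" "last xs = i" "length xs = min i D + 1"
    using broom_walk[OF D i] by blast
  have "gdist {0..<n} (broom_adj n D) 0 i \<le> min i D" using gdist_le[OF xs(1-3)] xs(4) by simp
  moreover have "min i D \<le> gdist {0..<n} (broom_adj n D) 0 i"
  proof -
    have "\<exists>xs. walk {0..<n} (broom_adj n D) xs \<and> hd xs = 0 \<and> last xs = i" using xs by blast
    from gdist_lev[OF this, of "\<lambda>i. min i D"] broom_lev show ?thesis by simp
  qed
  ultimately show ?thesis by (rule antisym)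
qed

lemma broom_te:
  fixes lam :: real
  assumes D: "1 \<le> D" "D \<le> n - 1" and lam: "lam \<noteq> 1"
  shows "te {0..<n} (broom_adj n D) lam 0 = broom_bound lam n D"
proof -
  define f where "f k = real k * lam ^ k" for k :: nat
  have "te {0..<n} (broom_adj n D) lam 0 = (\<Sum>i\<in>{1..<n}. f (min i D))"
    unfolding te_def f_def
    by (rule sum.cong) (auto simp: broom_dist[OF D])
  also have "{1..<n} = {1..D} \<union> {Suc D..<n}" using D by auto
  also have "(\<Sum>i\<in>{1..D} \<union> {Suc D..<n}. f (min i D)) = (\<Sum>i\<in>{1..D}. f (min i D)) + (\<Sum>i\<in>{Suc D..<n}. f (min i D))"
    by (rule sum.union_disjoint) auto
  also have "(\<Sum>i\<in>{1..D}. f (min i D)) = (\<Sum>i=1..D. f i)" by (rule sum.cong) auto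
  also have "(\<Sum>i\<in>{Suc D..<n}. f (min i D)) = (\<Sum>i\<in>{Suc D..<n}. f D)" by (rule sum.cong) auto
  also have "\<dots> = real (n - 1 - D) * f D" by simp
  finally have X: "te {0..<n} (broom_adj n D) lam 0 = (\<Sum>i=1..D. f i) + real (n - 1 - D) * f D" .
  have Y: "broom_bound lam n D = (\<Sum>i=1..D. f i) + (real (n - 1) - real D) * f D"
    using bb_eq[OF lam D(2)] unfolding f_def by simp
  have "real (n - 1 - D) = real (n - 1) - real D" using D by (simp add: of_nat_diff)
  then show ?thesis using X Y by simp
qed


theorem theorem2:
  fixes V :: "'a set" and E :: "'a \<Rightarrow> 'a \<Rightarrow> bool" and lam :: real
  assumes "0 < lam" and "lam < 1"
    and "simple_graph V E" and "connected_graph V E" and "card V \<ge> 2"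
  shows "Min (broom_bound lam (card V) ` {1..card V - 1}) \<le> mte V E lam
    \<and> (\<exists>D\<in>{1..card V - 1}.
         mte {0..<card V} (broom_adj (card V) D) lam = Min (broom_bound lam (card V) ` {1..card V - 1})
       \<and> te {0..<card V} (broom_adj (card V) D) lam 0 = Min (broom_bound lam (card V) ` {1..card V - 1}))"
proof -
  define n where "n = card V"
  have lam: "lam \<noteq> 1" using assms by simp
  have P1: "Min (broom_bound lam n ` {1..n - 1}) \<le> mte V E lam"
    using mte_lb[OF assms(3,4) lam assms(5)] unfolding n_def .
  have n2: "n \<ge> 2" using assms(5) n_def by simp
  have "Min (broom_bound lam n ` {1..n - 1}) \<in> broom_bound lam n ` {1..n - 1}"
    using n2 by (intro Min_in) auto
  then obtain D where D: "D \<in> {1..n - 1}" "broom_bound lam n D = Min (broom_bound lam n ` {1..n - 1})"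
    by auto
  have D1: "1 \<le> D" "D \<le> n - 1" using D by auto
  have te0: "te {0..<n} (broom_adj n D) lam 0 = Min (broom_bound lam n ` {1..n - 1})"
    using broom_te[OF D1 lam] D by simp
  have "Min (broom_bound lam (card {0..<n}) ` {1..card {0..<n} - 1}) \<le> mte {0..<n} (broom_adj n D) lam"
    using mte_lb[OF broom_sg broom_conn[OF D1] lam] n2 by simp
  then have lo: "Min (broom_bound lam n ` {1..n - 1}) \<le> mte {0..<n} (broom_adj n D) lam" by simp
  have "mte {0..<n} (broom_adj n D) lam \<le> te {0..<n} (broom_adj n D) lam 0"
    unfolding mte_def using n2 by (intro Min_le) auto
  with lo te0 have "mte {0..<n} (broom_adj n D) lam = Min (broom_bound lam n ` {1..n - 1})" by simp
  with te0 D P1 show ?thesis unfolding n_def by blast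
qed

end
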